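(* Let $X=\{(x,s)\in\mathbb{R}^n\times\mathbb{R}^n : e^Tx=1,\ x-s\le0,\ -x-s\le0\}$, where $e=(1,\dots,1)^T$, and let $(a,b)\in\mathbb{R}^n\times\mathbb{R}^n$. Let $(x^*,s^* )=P_X(a,b)$ denote the Euclidean projection of $(a,b)$ onto $X$. Then $$x^*=\tfrac12\big(\max\{0,a+b-\mu e\}-\max\{0,b-a+\mu e\}\big),\qquad s^*=\tfrac12\big(\max\{0,b-a+\mu e\}+\max\{0,a+b-\mu e\}\big),$$ where the maxima are taken componentwise and $\mu\in\mathbb{R}$ is a root of $$t(u):=\sum_{i=1}^n\Big(\max\{0,a_i+b_i-u\}-\max\{0,b_i-a_i+u\}\Big)-2.$$ *)

theory Defs
  imports "HOL-Analysis.Analysis"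
begin

definition Xset :: "((real^'n) \<times> (real^'n)) set" where
  "Xset = {(x, s). (\<Sum>i\<in>UNIV. x $ i) = 1 \<and> (\<forall>i. x $ i - s $ i \<le> 0) \<and> (\<forall>i. - x $ i - s $ i \<le> 0)}"

definition tfun :: "real^'n \<Rightarrow> real^'n \<Rightarrow> real \<Rightarrow> real" where
  "tfun a b u = (\<Sum>i\<in>UNIV. max 0 (a $ i + b $ i - u) - max 0 (b $ i - a $ i + u)) - 2"

end

theory Submission
  imports Defs
begin

lemma comp_ineq:
  fixes a b x s \<mu> :: real
  assumes "x - s \<le> 0" "- x - s \<le> 0"
  defines "\<alpha> \<equiv> max 0 (a + b - \<mu>)" and "\<beta> \<equiv> max 0 (b - a + \<mu>)"
  shows "(a - (\<alpha> - \<beta>)/2) * (x - (\<alpha> - \<beta>)/2) + (b - (\<alpha> + \<beta>)/2) * (s - (\<alpha> + \<beta>)/2)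
         \<le> \<mu> * (x - (\<alpha> - \<beta>)/2)"
proof -
  have id: "(a - (\<alpha> - \<beta>)/2) * (x - (\<alpha> - \<beta>)/2) + (b - (\<alpha> + \<beta>)/2) * (s - (\<alpha> + \<beta>)/2)
         - \<mu> * (x - (\<alpha> - \<beta>)/2) = (s + x - \<alpha>) * (a + b - \<mu> - \<alpha>) / 2 + (s - x - \<beta>) * (b - a + \<mu> - \<beta>) / 2"
    by (simp add: field_simps)
  have 1: "(s + x - \<alpha>) * (a + b - \<mu> - \<alpha>) \<le> 0"
  proof (cases "a + b - \<mu> \<ge> 0")
    case True then show ?thesis by (simp add: \<alpha>_def)
  next
    case False
    then have "\<alpha> = 0" by (simp add: \<alpha>_def)
    then show ?thesis using False assms(2) by (simp add: mult_nonneg_nonpos)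
  qed
  have 2: "(s - x - \<beta>) * (b - a + \<mu> - \<beta>) \<le> 0"
  proof (cases "b - a + \<mu> \<ge> 0")
    case True then show ?thesis by (simp add: \<beta>_def)
  next
    case False
    then have "\<beta> = 0" by (simp add: \<beta>_def)
    then show ?thesis using False assms(1) by (simp add: mult_nonneg_nonpos)
  qed
  show ?thesis using id 1 2 by linarith
qed

theorem mainTheorem7:
  fixes a b :: "real^'n" and \<mu> :: real
  assumes "tfun a b \<mu> = 0"
  shows "closest_point Xset (a, b) =
    ((\<chi> i. (max 0 (a $ i + b $ i - \<mu>) - max 0 (b $ i - a $ i + \<mu>)) / 2),
     (\<chi> i. (max 0 (b $ i - a $ i + \<mu>) + max 0 (a $ i + b $ i - \<mu>)) / 2))"
proof -
  define al where "al i = max 0 (a $ i + b $ i - \<mu>)" for i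
  define be where "be i = max 0 (b $ i - a $ i + \<mu>)" for i
  define xs :: "real^'n" where "xs = (\<chi> i. (al i - be i) / 2)"
  define ss :: "real^'n" where "ss = (\<chi> i. (be i + al i) / 2)"
  define q where "q = (xs, ss)"
  have sumx: "(\<Sum>i\<in>UNIV. xs $ i) = 1"
  proof -
    have "(\<Sum>i\<in>UNIV. al i - be i) = 2" using assms unfolding tfun_def al_def be_def by simp
    then show ?thesis unfolding xs_def by (simp add: sum_divide_distrib[symmetric])
  qed
  have qX: "q \<in> Xset"
  proof -
    have "al i \<ge> 0" "be i \<ge> 0" for i by (auto simp: al_def be_def)
    then have "xs $ i - ss $ i \<le> 0" "- xs $ i - ss $ i \<le> 0" for i
      by (auto simp: xs_def ss_def field_simps)
    then show ?thesis unfolding q_def Xset_def using sumx by auto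
  qed
  have key: "inner ((a, b) - q) (z - q) \<le> 0" if z: "z \<in> Xset" for z
  proof -
    obtain x s where zxs: "z = (x, s)" by (cases z)
    have x1: "(\<Sum>i\<in>UNIV. x $ i) = 1" and c1: "\<And>i. x $ i - s $ i \<le> 0"
      and c2: "\<And>i. - x $ i - s $ i \<le> 0"
      using z unfolding zxs Xset_def by auto
    have "inner ((a, b) - q) (z - q) =
       (\<Sum>i\<in>UNIV. (a $ i - (al i - be i)/2) * (x $ i - (al i - be i)/2)
          + (b $ i - (al i + be i)/2) * (s $ i - (al i + be i)/2))"
      unfolding zxs q_def by (simp add: inner_vec_def sum.distrib xs_def ss_def add.commute)
    also have "\<dots> \<le> (\<Sum>i\<in>UNIV. \<mu> * (x $ i - (al i - be i)/2))"
      apply (rule sum_mono)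
      unfolding al_def be_def by (rule comp_ineq[OF c1 c2])
    also have "\<dots> = \<mu> * ((\<Sum>i\<in>UNIV. x $ i) - (\<Sum>i\<in>UNIV. xs $ i))"
      by (simp add: sum_distrib_left[symmetric] sum_subtractf xs_def)
    also have "\<dots> = 0" using x1 sumx by simp
    finally show ?thesis .
  qed
  have strict: "dist (a, b) q < dist (a, b) z" if "z \<in> Xset" "z \<noteq> q" for z
  proof -
    have "(norm ((a, b) - z))\<^sup>2 = (norm (((a, b) - q) - (z - q)))\<^sup>2" by (simp add: algebra_simps)
    also have "\<dots> = (norm ((a, b) - q))\<^sup>2 - 2 * inner ((a, b) - q) (z - q) + (norm (z - q))\<^sup>2"
      using dot_norm_neg[of "(a, b) - q" "z - q"] by simp
    finally have e: "(norm ((a, b) - z))\<^sup>2 = (norm ((a, b) - q))\<^sup>2 - 2 * inner ((a, b) - q) (z - q) + (norm (z - q))\<^sup>2" .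
    have "norm (z - q) > 0" using that by simp
    then have "(norm ((a, b) - q))\<^sup>2 < (norm ((a, b) - z))\<^sup>2" using e key[OF that(1)]
      by (smt (verit) zero_less_power)
    then show ?thesis by (simp add: dist_norm power_less_imp_less_base)
  qed
  have "closest_point Xset (a, b) = q"
    unfolding closest_point_def
  proof (rule some_equality)
    show "q \<in> Xset \<and> (\<forall>y\<in>Xset. dist (a, b) q \<le> dist (a, b) y)"
      using qX strict by (metis order.order_iff_strict)
  next
    fix y assume "y \<in> Xset \<and> (\<forall>z\<in>Xset. dist (a, b) y \<le> dist (a, b) z)"
    then show "y = q" using qX strict by (meson not_less)
  qed
  then show ?thesis unfolding q_def xs_def ss_def al_def be_def by simp
qed

end
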